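(* Let $\theta:H\to H$ be an endomorphism. Then: (1) every $\theta$-maximal hyperideal of $H$ is an $n$-ary Endo-prime hyperideal associated with $\theta$; (2) if $E$ is a hyperideal of $H$ such that $rad(E)$ is a $\theta$-maximal hyperideal, then $E$ is an $n$-ary Endo-primary hyperideal associated with $\theta$.
   Context: Throughout, $(H,h,k)$ is a commutative Krasner $(m,n)$-hyperring with scalar identity $1_H$: $(H,h)$ is a canonical $m$-ary hypergroup (a commutative associative $m$-ary hyperoperation $h:H^m\to\mathcal P^*(H)$ with a unique zero $0$ such that $h(u,0^{(m-1)})=\{u\}$, unique inverses, reversibility), $k:H^n\to H$ is a commutative associative $n$-ary operation distributing over $h$ in each argument, $k(0,u_2^n)=0$, and $k(u,1_H^{(n-1)})=u$ for all $u$. Notation: $u_i^j$ denotes $u_i,\dots,u_j$ (empty if $j<i$); $u^{(t)}$ denotes $u$ repeated $t$ times; for $r=l(n-1)+1$, $k_{(l)}(u_1^r)=k(k(\cdots k(k(u_1^n),u_{n+1}^{2n-1})\cdots),u_{r-n+1}^{r})$. A hyperideal is a nonempty $I\subseteq H$ such that $(I,h)$ is an $m$-ary subhypergroup and $k(u_1^{i-1},I,u_{i+1}^n)\subseteq I$ for all $u_j\in H$. An endomorphism is a map $\theta$ with $\theta(h(u_1^m))=h(\theta(u_1),\dots,\theta(u_m))$, $\theta(k(u_1^n))=k(\theta(u_1),\dots,\theta(u_n))$, $\theta(1_H)=1_H$. $rad(E)$ is the set of $u$ with $k(u^{(r)},1_H^{(n-r)})\in E$ for some $r\le n$ or $k_{(l)}(u^{(r)})\in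 E$ for some $r=l(n-1)+1>n$ (equivalently the intersection of all $n$-ary prime hyperideals containing $E$). A proper hyperideal $M$ is $\theta$-maximal if for every hyperideal $E$ with $M\subseteq E$, either $\theta(E)\subseteq M$ or $E=H$. A proper hyperideal $E$ is an $n$-ary Endo-prime hyperideal associated with $\theta$ if for all $u_1,\dots,u_n\in H$, $k(u_1^n)\in E$ implies that for some $i$, $u_i\in E$ or $\theta\big(k(u_1^{i-1},1_H,u_{i+1}^n)\big)\in E$; it is an $n$-ary Endo-primary hyperideal associated with $\theta$ if $k(u_1^n)\in E$ implies that for some $i$, $u_i\in E$ or $\theta\big(k(u_1^{i-1},1_H,u_{i+1}^n)\big)\in rad(E)$. *)

theory Defs
  imports Main "HOL-Library.Multiset"
begin

text \<open>Elements of H are the elements of the type 'a (H = UNIV).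
  An m-ary hyperoperation is h :: 'a list => 'a set, an n-ary operation is
  k :: 'a list => 'a; only argument lists of the right length matter.
  List positions are 0-based.\<close>

definition hset :: "('a list \<Rightarrow> 'a set) \<Rightarrow> 'a set list \<Rightarrow> 'a set" where
  "hset h As = \<Union> {h ys | ys. list_all2 (\<in>) ys As}"

definition hneg :: "nat \<Rightarrow> ('a list \<Rightarrow> 'a set) \<Rightarrow> 'a \<Rightarrow> 'a \<Rightarrow> 'a" where
  "hneg m h z u = (THE v. z \<in> h (u # v # replicate (m - 2) z))"

definition canonical_hypergroup :: "nat \<Rightarrow> ('a list \<Rightarrow> 'a set) \<Rightarrow> 'a \<Rightarrow> bool" where
  "canonical_hypergroup m h z \<longleftrightarrow>
     m \<ge> 2 \<and>
     (\<forall>xs. length xs = m \<longrightarrow> h xs \<noteq> {}) \<and>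
     (\<forall>xs i j. length xs = 2 * m - 1 \<and> i < m \<and> j < m \<longrightarrow>
        hset h (map (\<lambda>x. {x}) (take i xs) @ [h (take m (drop i xs))] @ map (\<lambda>x. {x}) (drop (i + m) xs))
      = hset h (map (\<lambda>x. {x}) (take j xs) @ [h (take m (drop j xs))] @ map (\<lambda>x. {x}) (drop (j + m) xs))) \<and>
     (\<forall>xs ys. length xs = m \<and> mset xs = mset ys \<longrightarrow> h xs = h ys) \<and>
     (\<forall>u. h (u # replicate (m - 1) z) = {u}) \<and>
     (\<forall>z'. (\<forall>u. h (u # replicate (m - 1) z') = {u}) \<longrightarrow> z' = z) \<and>
     (\<forall>u. \<exists>!v. z \<in> h (u # v # replicate (m - 2) z)) \<and>
     (\<forall>xs x i. length xs = m \<and> i < m \<and> x \<in> h xs \<longrightarrow>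
        xs ! i \<in> h ((map (hneg m h z) xs)[i := x]))"

definition krasner_hyperring ::
  "nat \<Rightarrow> nat \<Rightarrow> ('a list \<Rightarrow> 'a set) \<Rightarrow> ('a list \<Rightarrow> 'a) \<Rightarrow> 'a \<Rightarrow> 'a \<Rightarrow> bool" where
  "krasner_hyperring m n h k z one \<longleftrightarrow>
     canonical_hypergroup m h z \<and> n \<ge> 2 \<and>
     (\<forall>xs i. length xs = 2 * n - 1 \<and> i < n \<longrightarrow>
        k (take i xs @ [k (take n (drop i xs))] @ drop (i + n) xs) = k (k (take n xs) # drop n xs)) \<and>
     (\<forall>xs ys. length xs = n \<and> mset xs = mset ys \<longrightarrow> k xs = k ys) \<and>
     (\<forall>xs ys i. length xs = n - 1 \<and> length ys = m \<and> i \<le> n - 1 \<longrightarrow>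
        (\<lambda>y. k (take i xs @ y # drop i xs)) ` h ys
          = h (map (\<lambda>y. k (take i xs @ y # drop i xs)) ys)) \<and>
     (\<forall>xs. length xs = n - 1 \<longrightarrow> k (z # xs) = z) \<and>
     (\<forall>u. k (u # replicate (n - 1) one) = u)"

definition endomorphism ::
  "nat \<Rightarrow> nat \<Rightarrow> ('a list \<Rightarrow> 'a set) \<Rightarrow> ('a list \<Rightarrow> 'a) \<Rightarrow> 'a \<Rightarrow> ('a \<Rightarrow> 'a) \<Rightarrow> bool" where
  "endomorphism m n h k one \<theta> \<longleftrightarrow>
     (\<forall>xs. length xs = m \<longrightarrow> \<theta> ` h xs = h (map \<theta> xs)) \<and>
     (\<forall>xs. length xs = n \<longrightarrow> \<theta> (k xs) = k (map \<theta> xs)) \<and>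
     \<theta> one = one"

definition hyperideal ::
  "nat \<Rightarrow> nat \<Rightarrow> ('a list \<Rightarrow> 'a set) \<Rightarrow> ('a list \<Rightarrow> 'a) \<Rightarrow> 'a \<Rightarrow> 'a set \<Rightarrow> bool" where
  "hyperideal m n h k z I \<longleftrightarrow>
     I \<noteq> {} \<and>
     (\<forall>xs. length xs = m \<and> set xs \<subseteq> I \<longrightarrow> h xs \<subseteq> I) \<and>
     (\<forall>x\<in>I. hneg m h z x \<in> I) \<and>
     (\<forall>xs i. length xs = n \<and> i < n \<and> xs ! i \<in> I \<longrightarrow> k xs \<in> I)"

text \<open>kpow k n u l = k_(l)(u^(r)) with r = l(n-1)+1.\<close>
fun kpow :: "('a list \<Rightarrow> 'a) \<Rightarrow> nat \<Rightarrow> 'a \<Rightarrow> nat \<Rightarrow> 'a" where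
  "kpow k n u 0 = u"
| "kpow k n u (Suc l) = k (kpow k n u l # replicate (n - 1) u)"

definition hrad :: "nat \<Rightarrow> ('a list \<Rightarrow> 'a) \<Rightarrow> 'a \<Rightarrow> 'a set \<Rightarrow> 'a set" where
  "hrad n k one E = {u. (\<exists>r. 1 \<le> r \<and> r \<le> n \<and> k (replicate r u @ replicate (n - r) one) \<in> E)
                    \<or> (\<exists>l. l * (n - 1) + 1 > n \<and> kpow k n u l \<in> E)}"

definition theta_maximal ::
  "nat \<Rightarrow> nat \<Rightarrow> ('a list \<Rightarrow> 'a set) \<Rightarrow> ('a list \<Rightarrow> 'a) \<Rightarrow> 'a \<Rightarrow> ('a \<Rightarrow> 'a) \<Rightarrow> 'a set \<Rightarrow> bool" where
  "theta_maximal m n h k z \<theta> M \<longleftrightarrow>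
     hyperideal m n h k z M \<and> M \<noteq> UNIV \<and>
     (\<forall>E. hyperideal m n h k z E \<and> M \<subseteq> E \<longrightarrow> \<theta> ` E \<subseteq> M \<or> E = UNIV)"

definition endo_prime ::
  "nat \<Rightarrow> nat \<Rightarrow> ('a list \<Rightarrow> 'a set) \<Rightarrow> ('a list \<Rightarrow> 'a) \<Rightarrow> 'a \<Rightarrow> 'a \<Rightarrow> ('a \<Rightarrow> 'a) \<Rightarrow> 'a set \<Rightarrow> bool" where
  "endo_prime m n h k z one \<theta> E \<longleftrightarrow>
     hyperideal m n h k z E \<and> E \<noteq> UNIV \<and>
     (\<forall>us. length us = n \<and> k us \<in> E \<longrightarrow>
        (\<exists>i<n. us ! i \<in> E \<or> \<theta> (k (us[i := one])) \<in> E))"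

definition endo_primary ::
  "nat \<Rightarrow> nat \<Rightarrow> ('a list \<Rightarrow> 'a set) \<Rightarrow> ('a list \<Rightarrow> 'a) \<Rightarrow> 'a \<Rightarrow> 'a \<Rightarrow> ('a \<Rightarrow> 'a) \<Rightarrow> 'a set \<Rightarrow> bool" where
  "endo_primary m n h k z one \<theta> E \<longleftrightarrow>
     hyperideal m n h k z E \<and> E \<noteq> UNIV \<and>
     (\<forall>us. length us = n \<and> k us \<in> E \<longrightarrow>
        (\<exists>i<n. us ! i \<in> E \<or> \<theta> (k (us[i := one])) \<in> hrad n k one E))"

end

theory Submission
  imports Defs
begin


lemma kr_n2: "krasner_hyperring m n h k z one \<Longrightarrow> n \<ge> 2"
  unfolding krasner_hyperring_def by (elim conjE)

lemma kr_CH: "krasner_hyperring m n h k z one \<Longrightarrow> canonical_hypergroup m h z"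
  unfolding krasner_hyperring_def by (elim conjE)

lemma kr_m2: "krasner_hyperring m n h k z one \<Longrightarrow> m \<ge> 2"
  by (drule kr_CH) (unfold canonical_hypergroup_def, elim conjE)

lemma kr_ex: "krasner_hyperring m n h k z one \<Longrightarrow> \<exists>!v. z \<in> h (u # v # replicate (m - 2) z)"
proof -
  assume "krasner_hyperring m n h k z one"
  then have "canonical_hypergroup m h z" by (rule kr_CH)
  then have "\<forall>u. \<exists>!v. z \<in> h (u # v # replicate (m - 2) z)" unfolding canonical_hypergroup_def by (elim conjE)
  then show ?thesis by (rule spec)
qed

lemma kr_dist0:
  assumes K: "krasner_hyperring m n h k z one" and "length c = n - 1" "length ys = m"
  shows "(\<lambda>y. k (y # c)) ` h ys = h (map (\<lambda>y. k (y # c)) ys)"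
proof -
  have "\<forall>xs ys i. length xs = n - 1 \<and> length ys = m \<and> i \<le> n - 1 \<longrightarrow>
        (\<lambda>y. k (take i xs @ y # drop i xs)) ` h ys
          = h (map (\<lambda>y. k (take i xs @ y # drop i xs)) ys)" using K unfolding krasner_hyperring_def by (elim conjE)
  then have "(\<lambda>y. k (take 0 c @ y # drop 0 c)) ` h ys = h (map (\<lambda>y. k (take 0 c @ y # drop 0 c)) ys)"
    using assms(2,3) by blast
  then show ?thesis by simp
qed

lemma kr_zero:
  assumes K: "krasner_hyperring m n h k z one" and c: "length c = n - 1"
  shows "k (z # c) = z"
proof -
  have "\<forall>xs. length xs = n - 1 \<longrightarrow> k (z # xs) = z"
    using K unfolding krasner_hyperring_def by (elim conjE)
  then show ?thesis using c by blast
qed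

lemma kr_one:
  assumes K: "krasner_hyperring m n h k z one"
  shows "k (u # replicate (n - 1) one) = u"
proof -
  have "\<forall>u. k (u # replicate (n - 1) one) = u"
    using K unfolding krasner_hyperring_def by (elim conjE)
  then show ?thesis by blast
qed

lemma kr_assoc:
  assumes K: "krasner_hyperring m n h k z one" and "length xs = 2 * n - 1" "i < n"
  shows "k (take i xs @ [k (take n (drop i xs))] @ drop (i + n) xs) = k (k (take n xs) # drop n xs)"
proof -
  have "\<forall>xs i. length xs = 2 * n - 1 \<and> i < n \<longrightarrow>
        k (take i xs @ [k (take n (drop i xs))] @ drop (i + n) xs) = k (k (take n xs) # drop n xs)"
    using K unfolding krasner_hyperring_def by (elim conjE)
  then show ?thesis using assms(2,3) by blast
qed

lemma kr_comm:
  assumes K: "krasner_hyperring m n h k z one" and "length xs = n" "mset xs = mset ys"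
  shows "k xs = k ys"
proof -
  have "\<forall>xs ys. length xs = n \<and> mset xs = mset ys \<longrightarrow> k xs = k ys"
    using K unfolding krasner_hyperring_def by (elim conjE)
  then show ?thesis using assms(2,3) by blast
qed

lemma kr_swap:
  assumes K: "krasner_hyperring m n h k z one" and A: "length A = n - 1" and B: "length B = n - 1"
  shows "k (k (x # A) # B) = k (k (x # B) # A)"
proof -
  have n2: "n \<ge> 2" using K by (rule kr_n2)
  define L where "L = A @ x # B"
  have lenL: "length L = 2 * n - 1" using A B n2 by (simp add: L_def)
  have ax: "k (take (n-1) L @ [k (take n (drop (n-1) L))] @ drop (n - 1 + n) L) = k (k (take n L) # drop n L)"
    by (rule kr_assoc[OF K lenL]) (use n2 in simp)
  have t1: "take (n-1) L = A" using A by (simp add: L_def)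
  have t2: "take n (drop (n-1) L) = x # B" using A B n2 by (simp add: L_def)
  have t3: "drop (n - 1 + n) L = []" using lenL by simp
  have t4: "take n L = A @ [x]" using A n2 by (simp add: L_def take_append)
  have t5: "drop n L = B" using A n2 by (simp add: L_def)
  have e: "k (A @ [k (x # B)]) = k (k (A @ [x]) # B)" using ax t1 t2 t3 t4 t5 by simp
  have e1: "k (A @ [k (x # B)]) = k (k (x # B) # A)"
    by (rule kr_comm[OF K]) (use A n2 in auto)
  have e2: "k (A @ [x]) = k (x # A)"
    by (rule kr_comm[OF K]) (use A n2 in auto)
  show ?thesis using e e1 e2 by simp
qed

lemma kr_hneg:
  assumes K: "krasner_hyperring m n h k z one" and c: "length c = n - 1"
  shows "k (hneg m h z x # c) = hneg m h z (k (x # c))"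
proof -
  have m2: "m \<ge> 2" using K by (rule kr_m2)
  define v where "v = hneg m h z x"
  have zv: "z \<in> h (x # v # replicate (m - 2) z)"
    unfolding v_def hneg_def by (rule theI'[OF kr_ex[OF K]])
  have D: "(\<lambda>y. k (y # c)) ` h (x # v # replicate (m - 2) z)
     = h (map (\<lambda>y. k (y # c)) (x # v # replicate (m - 2) z))"
    by (rule kr_dist0[OF K c]) (use m2 in simp)
  have kz: "k (z # c) = z" using K c by (rule kr_zero)
  have "k (z # c) \<in> (\<lambda>y. k (y # c)) ` h (x # v # replicate (m - 2) z)" using zv by blast
  then have "z \<in> h (k (x # c) # k (v # c) # replicate (m - 2) z)"
    using D kz by (simp add: map_replicate)
  then have "hneg m h z (k (x # c)) = k (v # c)"
    unfolding hneg_def by (rule the1_equality[OF kr_ex[OF K]])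
  then show ?thesis by (simp add: v_def)
qed

lemma colon_hyperideal:
  assumes K: "krasner_hyperring m n h k z one" and c: "length c = n - 1"
    and M: "hyperideal m n h k z M"
  shows "hyperideal m n h k z {x. k (x # c) \<in> M}" (is "hyperideal m n h k z ?F")
proof -
  have n2: "n \<ge> 2" using K by (rule kr_n2)
  have idl: "\<And>xs i. length xs = n \<Longrightarrow> i < n \<Longrightarrow> xs ! i \<in> M \<Longrightarrow> k xs \<in> M"
    using M unfolding hyperideal_def by blast
  have sub: "M \<subseteq> ?F"
  proof
    fix x assume "x \<in> M"
    then show "x \<in> ?F" using idl[of "x # c" 0] c n2 by simp
  qed
  have ne: "?F \<noteq> {}" using sub M unfolding hyperideal_def by blast
  have hcl: "h xs \<subseteq> ?F" if "length xs = m" "set xs \<subseteq> ?F" for xs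
  proof
    fix y assume y: "y \<in> h xs"
    have D: "(\<lambda>y. k (y # c)) ` h xs = h (map (\<lambda>y. k (y # c)) xs)"
      using K c that(1) by (rule kr_dist0)
    have "k (y # c) \<in> h (map (\<lambda>y. k (y # c)) xs)" using D y by blast
    moreover have "h (map (\<lambda>y. k (y # c)) xs) \<subseteq> M"
    proof -
      have cl: "\<forall>xs. length xs = m \<and> set xs \<subseteq> M \<longrightarrow> h xs \<subseteq> M"
        using M unfolding hyperideal_def by (elim conjE)
      have "length (map (\<lambda>y. k (y # c)) xs) = m" using that by simp
      moreover have "set (map (\<lambda>y. k (y # c)) xs) \<subseteq> M" using that by auto
      ultimately show ?thesis using cl by blast
    qed
    ultimately show "y \<in> ?F" by auto
  qed
  have ncl: "hneg m h z x \<in> ?F" if "x \<in> ?F" for x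
  proof -
    have "hneg m h z (k (x # c)) \<in> M" using that M unfolding hyperideal_def by (elim conjE) simp
    then show ?thesis using kr_hneg[OF K c, of x] by simp
  qed
  have kcl: "k xs \<in> ?F" if xs: "length xs = n" "i < n" "xs ! i \<in> ?F" for xs i
  proof -
    define x where "x = xs ! i"
    define rest where "rest = take i xs @ drop (Suc i) xs"
    have xs_eq: "xs = take i xs @ x # drop (Suc i) xs" using xs by (simp add: x_def id_take_nth_drop)
    have "mset xs = mset (x # rest)" unfolding rest_def by (subst xs_eq) simp
    then have kx: "k xs = k (x # rest)" using kr_comm[OF K] xs by blast
    have lr: "length rest = n - 1" using xs by (simp add: rest_def)
    have "k (k (x # rest) # c) = k (k (x # c) # rest)" by (rule kr_swap[OF K lr c])
    moreover have "k (k (x # c) # rest) \<in> M" using idl[of "k (x # c) # rest" 0] xs lr n2 x_def by simp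
    ultimately show ?thesis using kx by simp
  qed
  show ?thesis unfolding hyperideal_def using ne hcl ncl kcl by (intro conjI allI impI ballI) auto
qed


lemma core:
  assumes K: "krasner_hyperring m n h k z one" and M: "hyperideal m n h k z M"
    and mx: "\<forall>E. hyperideal m n h k z E \<and> M \<subseteq> E \<longrightarrow> \<theta> ` E \<subseteq> M \<or> E = UNIV"
    and us: "length us = n" and kus: "k us \<in> M"
  shows "us ! 0 \<in> M \<or> \<theta> (k (us[0 := one])) \<in> M"
proof -
  have n2: "n \<ge> 2" using K by (rule kr_n2)
  have idl: "\<And>xs i. length xs = n \<Longrightarrow> i < n \<Longrightarrow> xs ! i \<in> M \<Longrightarrow> k xs \<in> M"
    using M unfolding hyperideal_def by (elim conjE) blast
  obtain u rest where ur: "us = u # rest" using us n2 by (cases us) auto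
  have lr: "length rest = n - 1" using us ur by simp
  define c where "c = u # replicate (n - 2) one"
  have lc: "length c = n - 1" using n2 by (simp add: c_def)
  define F where "F = {x. k (x # c) \<in> M}"
  have HF: "hyperideal m n h k z F" unfolding F_def by (rule colon_hyperideal[OF K lc M])
  have sub: "M \<subseteq> F"
  proof
    fix x assume "x \<in> M"
    then show "x \<in> F" using idl[of "x # c" 0] lc n2 by (simp add: F_def)
  qed
  have kc: "k (one # c) = u"
  proof -
    have nn: "n - 1 = Suc (n - 2)" using n2 by simp
    have "mset (one # c) = mset (u # replicate (n - 1) one)"
      unfolding c_def nn by simp
    moreover have "length (one # c) = n" using lc n2 by simp
    ultimately have "k (one # c) = k (u # replicate (n - 1) one)"
      using kr_comm[OF K] by blast
    then show ?thesis using kr_one[OF K] by simp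
  qed
  define w where "w = k (one # rest)"
  have "k (w # c) = k (k (one # c) # rest)" unfolding w_def by (rule kr_swap[OF K lr lc])
  then have "w \<in> F" using kc kus ur by (simp add: F_def)
  show ?thesis
  proof (cases "F = UNIV")
    case True
    then have "one \<in> F" by simp
    then show ?thesis using kc ur by (simp add: F_def)
  next
    case False
    then have "\<theta> ` F \<subseteq> M" using mx HF sub by blast
    then show ?thesis using \<open>w \<in> F\<close> ur w_def by auto
  qed
qed

theorem mainTheorem20:
  fixes h :: "'a list \<Rightarrow> 'a set" and k :: "'a list \<Rightarrow> 'a"
    and z one :: 'a and \<theta> :: "'a \<Rightarrow> 'a" and m n :: nat
  assumes "krasner_hyperring m n h k z one"
    and "endomorphism m n h k one \<theta>"
  shows "(\<forall>M. theta_maximal m n h k z \<theta> M \<longrightarrow> endo_prime m n h k z one \<theta> M) \<and>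
         (\<forall>E. hyperideal m n h k z E \<and> theta_maximal m n h k z \<theta> (hrad n k one E)
              \<longrightarrow> endo_primary m n h k z one \<theta> E)"
proof (intro conjI allI impI)
  note K = assms(1)
  have n2: "n \<ge> 2" using K by (rule kr_n2)
  fix M assume tm: "theta_maximal m n h k z \<theta> M"
  have M: "hyperideal m n h k z M" and MU: "M \<noteq> UNIV"
    and mx: "\<forall>E. hyperideal m n h k z E \<and> M \<subseteq> E \<longrightarrow> \<theta> ` E \<subseteq> M \<or> E = UNIV"
    using tm unfolding theta_maximal_def by blast+
  show "endo_prime m n h k z one \<theta> M" unfolding endo_prime_def
  proof (intro conjI allI impI M MU)
    fix us assume "length us = n \<and> k us \<in> M"
    then have "us ! 0 \<in> M \<or> \<theta> (k (us[0 := one])) \<in> M" using core[OF K M mx] by blast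
    moreover have "0 < n" using n2 by simp
    ultimately show "\<exists>i<n. us ! i \<in> M \<or> \<theta> (k (us[i := one])) \<in> M" by blast
  qed
next
  note K = assms(1)
  have n2: "n \<ge> 2" using K by (rule kr_n2)
  fix E assume a: "hyperideal m n h k z E \<and> theta_maximal m n h k z \<theta> (hrad n k one E)"
  define R where "R = hrad n k one E"
  have E: "hyperideal m n h k z E" using a by blast
  have R: "hyperideal m n h k z R" and RU: "R \<noteq> UNIV"
    and mx: "\<forall>E. hyperideal m n h k z E \<and> R \<subseteq> E \<longrightarrow> \<theta> ` E \<subseteq> R \<or> E = UNIV"
    using a unfolding theta_maximal_def R_def by blast+
  have ER: "E \<subseteq> R"
  proof
    fix u assume "u \<in> E"
    then have "k (replicate 1 u @ replicate (n - 1) one) \<in> E" using kr_one[OF K, of u] by simp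
    then show "u \<in> R" unfolding R_def hrad_def using n2 by auto
  qed
  have thR: "\<theta> ` R \<subseteq> R" using mx RU R by blast
  have idl: "\<And>xs i. length xs = n \<Longrightarrow> i < n \<Longrightarrow> xs ! i \<in> R \<Longrightarrow> k xs \<in> R"
    using R unfolding hyperideal_def by (elim conjE) blast
  show "endo_primary m n h k z one \<theta> E" unfolding endo_primary_def
  proof (intro conjI allI impI E)
    show "E \<noteq> UNIV" using ER RU by auto
  next
    fix us assume u: "length us = n \<and> k us \<in> E"
    then have "us ! 0 \<in> R \<or> \<theta> (k (us[0 := one])) \<in> R" using core[OF K R mx] ER by blast
    then show "\<exists>i<n. us ! i \<in> E \<or> \<theta> (k (us[i := one])) \<in> hrad n k one E"
    proof
      assume "us ! 0 \<in> R"
      then have "(us[1 := one]) ! 0 \<in> R" by simp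
      then have "k (us[1 := one]) \<in> R" using idl[of "us[1 := one]" 0] u n2 by simp
      then have "\<theta> (k (us[1 := one])) \<in> R" using thR by blast
      then show ?thesis using n2 R_def by (intro exI[of _ 1]) auto
    next
      assume "\<theta> (k (us[0 := one])) \<in> R"
      then show ?thesis using n2 R_def by (intro exI[of _ 0]) auto
    qed
  qed
qed

end
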